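(* Let $M$ be a helix hypersurface in $E^n$ with direction $d$, and let $\alpha: I\subset\mathbb{R}\to M$ be a unit speed (arc-length parametrized) curve on $M$ with Frenet frame $\{V_1(s),\dots,V_n(s)\}$. If $\alpha$ is a geodesic curve on $M$, then $d\in\mathrm{Sp}\{V_2'\}^\perp$ along $\alpha$, i.e. $\langle V_2'(s),d\rangle=0$ for all $s\in I$.
   Context: $\langle\cdot,\cdot\rangle$ is the standard inner product on $E^n=\mathbb{R}^n$. A hypersurface $M\subset\mathbb{R}^n$ with unit normal $N$ is a helix with respect to a fixed unit direction $d$ if the angle between $d$ and $T_qM$ is the same for all $q\in M$, equivalently $\langle d,N\rangle$ is constant on $M$. The Frenet frame of a unit speed curve with nonvanishing curvatures $k_i$ is the orthonormal frame $\{V_1=\alpha',V_2,\dots,V_n\}$ with $V_1'=k_1V_2$, $V_i'=-k_{i-1}V_{i-1}+k_iV_{i+1}$ ($1<i<n$), $V_n'=-k_{n-1}V_{n-1}$. A curve on $M$ is a geodesic if $\alpha''$ is normal to $M$. $\mathrm{Sp}\{v\}^\perp$ is the orthogonal complement of the span of $v$. *)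

theory Defs
  imports "HOL-Analysis.Analysis"
begin

text \<open>Ambient space: E^n = real^'n, with n = CARD('n).\<close>

definition local_defining_fn ::
  "(real^'n) set \<Rightarrow> real^'n \<Rightarrow> (real^'n) set \<Rightarrow> (real^'n \<Rightarrow> real) \<Rightarrow> (real^'n \<Rightarrow> real^'n) \<Rightarrow> bool" where
  "local_defining_fn M q U f g \<longleftrightarrow>
     open U \<and> q \<in> U \<and>
     (\<forall>x\<in>U. (f has_derivative (\<lambda>v. g x \<bullet> v)) (at x)) \<and>
     continuous_on U g \<and> (\<forall>x\<in>U. g x \<noteq> 0) \<and>
     M \<inter> U = {x\<in>U. f x = 0}"

definition hypersurface :: "(real^'n) set \<Rightarrow> bool" where
  "hypersurface M \<longleftrightarrow> (\<forall>q\<in>M. \<exists>U f g. local_defining_fn M q U f g)"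

definition tangent_space :: "(real^'n) set \<Rightarrow> real^'n \<Rightarrow> (real^'n) set" where
  "tangent_space M q = {v. \<exists>U f g. local_defining_fn M q U f g \<and> g q \<bullet> v = 0}"

definition unit_normal :: "(real^'n) set \<Rightarrow> (real^'n \<Rightarrow> real^'n) \<Rightarrow> bool" where
  "unit_normal M N \<longleftrightarrow> hypersurface M \<and> continuous_on M N \<and>
     (\<forall>q\<in>M. norm (N q) = 1 \<and> (\<forall>v\<in>tangent_space M q. N q \<bullet> v = 0))"

definition helix_hypersurface ::
  "(real^'n) set \<Rightarrow> (real^'n \<Rightarrow> real^'n) \<Rightarrow> real^'n \<Rightarrow> bool" where
  "helix_hypersurface M N d \<longleftrightarrow> unit_normal M N \<and> norm d = 1 \<and>
     (\<exists>c. \<forall>q\<in>M. d \<bullet> N q = c)"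

text \<open>Frenet frame {V_1,...,V_n} (n = CARD('n)) with nonvanishing curvatures k_1,...,k_{n-1}
  of the curve alpha on the interval I; V_1 = alpha' (so alpha is unit speed).\<close>
definition frenet_frame ::
  "(real \<Rightarrow> real^'n) \<Rightarrow> real set \<Rightarrow> (nat \<Rightarrow> real \<Rightarrow> real^'n) \<Rightarrow> (nat \<Rightarrow> real \<Rightarrow> real) \<Rightarrow> bool" where
  "frenet_frame \<alpha> I V k \<longleftrightarrow>
     (let n = CARD('n) in
      (\<forall>s\<in>I. \<forall>i\<in>{1..n}. \<forall>j\<in>{1..n}. V i s \<bullet> V j s = (if i = j then 1 else 0)) \<and>
      (\<forall>s\<in>I. \<forall>i\<in>{1..<n}. k i s \<noteq> 0) \<and>
      (\<forall>s\<in>I. (\<alpha> has_vector_derivative V 1 s) (at s)) \<and>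
      (\<forall>s\<in>I. (V 1 has_vector_derivative k 1 s *\<^sub>R V 2 s) (at s)) \<and>
      (\<forall>s\<in>I. \<forall>i. 1 < i \<and> i < n \<longrightarrow>
          (V i has_vector_derivative (- k (i - 1) s *\<^sub>R V (i - 1) s + k i s *\<^sub>R V (i + 1) s)) (at s)) \<and>
      (\<forall>s\<in>I. (V n has_vector_derivative (- k (n - 1) s *\<^sub>R V (n - 1) s)) (at s)))"

definition geodesic_on :: "(real^'n) set \<Rightarrow> (real \<Rightarrow> real^'n) \<Rightarrow> real set \<Rightarrow> bool" where
  "geodesic_on M \<alpha> I \<longleftrightarrow> \<alpha> ` I \<subseteq> M \<and>
     (\<forall>s\<in>I. \<forall>v\<in>tangent_space M (\<alpha> s).
        vector_derivative (\<lambda>t. vector_derivative \<alpha> (at t)) (at s) \<bullet> v = 0)"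

end

theory Submission
  imports Defs
begin

lemma perp_hyperplane:
  fixes g v :: "real^'n"
  assumes "g \<noteq> 0" and "\<And>w. g \<bullet> w = 0 \<Longrightarrow> v \<bullet> w = 0"
  shows "v = ((v \<bullet> g) / (g \<bullet> g)) *\<^sub>R g"
proof -
  define w where "w = v - ((v \<bullet> g) / (g \<bullet> g)) *\<^sub>R g"
  have gg: "g \<bullet> g \<noteq> 0" using assms(1) by simp
  have "g \<bullet> w = 0" unfolding w_def using gg by (simp add: inner_diff_right inner_commute)
  hence "v \<bullet> w = 0" using assms(2) by blast
  hence "w \<bullet> w = 0" using \<open>g \<bullet> w = 0\<close> unfolding w_def
    by (simp add: inner_diff_left)
  hence "w = 0" by simp
  thus ?thesis unfolding w_def by simp
qed

lemma parallel_units: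
  fixes g a b :: "real^'n"
  assumes "g \<noteq> 0" and "\<And>w. g \<bullet> w = 0 \<Longrightarrow> a \<bullet> w = 0"
    and "\<And>w. g \<bullet> w = 0 \<Longrightarrow> b \<bullet> w = 0"
    and "norm a = 1" and "norm b = 1"
  shows "a = (a \<bullet> b) *\<^sub>R b \<and> (a \<bullet> b = 1 \<or> a \<bullet> b = -1)"
proof -
  define x where "x = (a \<bullet> g) / (g \<bullet> g)"
  define y where "y = (b \<bullet> g) / (g \<bullet> g)"
  have a: "a = x *\<^sub>R g" unfolding x_def using perp_hyperplane[OF assms(1,2)] by blast
  have b: "b = y *\<^sub>R g" unfolding y_def using perp_hyperplane[OF assms(1,3)] by blast
  have y0: "y \<noteq> 0" using b assms(5) by auto
  have ab: "a = (x / y) *\<^sub>R b" using a b y0 by simp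
  have bb: "b \<bullet> b = 1" using assms(5) by (simp add: norm_eq_1)
  have aab: "a \<bullet> b = x / y" by (subst ab) (simp add: bb)
  have "norm a = \<bar>x / y\<bar> * norm b" by (subst ab) simp
  hence "norm a = \<bar>x / y\<bar>" using assms(5) by simp
  hence "\<bar>x/y\<bar> = 1" using assms(4) by linarith
  hence "x/y = 1 \<or> x/y = -1" by linarith
  thus ?thesis using ab aab by metis
qed

theorem corollary3p2:
  fixes M :: "(real^'n) set" and N :: "real^'n \<Rightarrow> real^'n" and d :: "real^'n"
    and \<alpha> :: "real \<Rightarrow> real^'n" and I :: "real set"
    and V :: "nat \<Rightarrow> real \<Rightarrow> real^'n" and k :: "nat \<Rightarrow> real \<Rightarrow> real"
  assumes "CARD('n) \<ge> 2"
    and "helix_hypersurface M N d"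
    and "open I" and "is_interval I"
    and "\<alpha> ` I \<subseteq> M"
    and "frenet_frame \<alpha> I V k"
    and "geodesic_on M \<alpha> I"
  shows "\<forall>s\<in>I. vector_derivative (V 2) (at s) \<bullet> d = 0"
proof -
  let ?n = "CARD('n)"
  have un: "unit_normal M N" and nd: "norm d = 1" and c: "\<exists>c. \<forall>q\<in>M. d \<bullet> N q = c"
    using assms(2) unfolding helix_hypersurface_def by auto
  then obtain c where c: "\<And>q. q \<in> M \<Longrightarrow> d \<bullet> N q = c" by blast
  have hs: "hypersurface M" and Ncont: "continuous_on M N"
    and Nprop: "\<And>q. q \<in> M \<Longrightarrow> norm (N q) = 1 \<and> (\<forall>v\<in>tangent_space M q. N q \<bullet> v = 0)"
    using un unfolding unit_normal_def by auto
  have orth: "\<And>s i j. s \<in> I \<Longrightarrow> i \<in> {1..?n} \<Longrightarrow> j \<in> {1..?n} \<Longrightarrow> V i s \<bullet> V j s = (if i = j then 1 else 0)"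
    and kne: "\<And>s i. s \<in> I \<Longrightarrow> i \<in> {1..<?n} \<Longrightarrow> k i s \<noteq> 0"
    and d\<alpha>: "\<And>s. s \<in> I \<Longrightarrow> (\<alpha> has_vector_derivative V 1 s) (at s)"
    and dV1: "\<And>s. s \<in> I \<Longrightarrow> (V 1 has_vector_derivative k 1 s *\<^sub>R V 2 s) (at s)"
    and dVi: "\<And>s i. s \<in> I \<Longrightarrow> 1 < i \<Longrightarrow> i < ?n \<Longrightarrow>
          (V i has_vector_derivative (- k (i - 1) s *\<^sub>R V (i - 1) s + k i s *\<^sub>R V (i + 1) s)) (at s)"
    and dVn: "\<And>s. s \<in> I \<Longrightarrow> (V ?n has_vector_derivative (- k (?n - 1) s *\<^sub>R V (?n - 1) s)) (at s)"
    using assms(6) unfolding frenet_frame_def Let_def by auto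
  have geo: "\<And>s v. s \<in> I \<Longrightarrow> v \<in> tangent_space M (\<alpha> s) \<Longrightarrow>
        vector_derivative (\<lambda>t. vector_derivative \<alpha> (at t)) (at s) \<bullet> v = 0"
    using assms(7) unfolding geodesic_on_def by auto
  have dV2: "\<And>s. s \<in> I \<Longrightarrow> \<exists>D. (V 2 has_vector_derivative D) (at s)"
  proof -
    fix s assume s: "s \<in> I"
    show "\<exists>D. (V 2 has_vector_derivative D) (at s)"
    proof (cases "?n = 2")
      case True thus ?thesis using dVn[OF s] by metis
    next
      case False thus ?thesis using dVi[OF s, of 2] assms(1) by auto
    qed
  qed
  have acc: "\<And>s. s \<in> I \<Longrightarrow> vector_derivative (\<lambda>t. vector_derivative \<alpha> (at t)) (at s) = k 1 s *\<^sub>R V 2 s"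
  proof -
    fix s assume s: "s \<in> I"
    have "((\<lambda>t. vector_derivative \<alpha> (at t)) has_vector_derivative k 1 s *\<^sub>R V 2 s) (at s)"
      apply (rule has_vector_derivative_transform_within_open[OF dV1[OF s] assms(3) s])
      using d\<alpha> vector_derivative_at by metis
    thus "?thesis s" using vector_derivative_at by blast
  qed
  have k1: "\<And>s. s \<in> I \<Longrightarrow> k 1 s \<noteq> 0" using kne assms(1) by auto
  define e where "e s = V 2 s \<bullet> N (\<alpha> s)" for s
  have par: "\<And>s. s \<in> I \<Longrightarrow> V 2 s = e s *\<^sub>R N (\<alpha> s) \<and> (e s = 1 \<or> e s = -1)"
  proof -
    fix s assume s: "s \<in> I"
    have q: "\<alpha> s \<in> M" using assms(5) s by auto
    then obtain U f g where L: "local_defining_fn M (\<alpha> s) U f g"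
      using hs unfolding hypersurface_def by blast
    have g0: "g (\<alpha> s) \<noteq> 0" using L unfolding local_defining_fn_def by auto
    have T: "\<And>w. g (\<alpha> s) \<bullet> w = 0 \<Longrightarrow> w \<in> tangent_space M (\<alpha> s)"
      unfolding tangent_space_def using L by blast
    have A: "\<And>w. g (\<alpha> s) \<bullet> w = 0 \<Longrightarrow> V 2 s \<bullet> w = 0"
    proof -
      fix w assume "g (\<alpha> s) \<bullet> w = 0"
      hence "k 1 s *\<^sub>R V 2 s \<bullet> w = 0" using geo[OF s T] acc[OF s] by metis
      thus "V 2 s \<bullet> w = 0" using k1[OF s] by simp
    qed
    have B: "\<And>w. g (\<alpha> s) \<bullet> w = 0 \<Longrightarrow> N (\<alpha> s) \<bullet> w = 0" using T Nprop[OF q] by blast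
    have n2: "norm (V 2 s) = 1" using orth[OF s, of 2 2] assms(1) by (simp add: norm_eq_1)
    show "?thesis s" using parallel_units[OF g0 A B n2] Nprop[OF q] unfolding e_def by blast
  qed
  have V2cont: "continuous_on I (V 2)"
    by (metis dV2 continuous_at_imp_continuous_on has_vector_derivative_continuous)
  have acont: "continuous_on I \<alpha>"
    by (metis d\<alpha> continuous_at_imp_continuous_on has_vector_derivative_continuous)
  have Nacont: "continuous_on I (\<lambda>s. N (\<alpha> s))"
    using continuous_on_compose[OF acont continuous_on_subset[OF Ncont assms(5)]] by (simp add: o_def)
  have econt: "continuous_on I e" unfolding e_def
    by (intro continuous_intros V2cont Nacont)
  have "finite (e ` I)"
    by (rule finite_subset[of _ "{1, -1}"]) (use par in auto)
  hence "e constant_on I"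
    using continuous_finite_range_constant[OF is_interval_connected[OF assms(4)] econt] by blast
  then obtain e0 where e0: "\<And>s. s \<in> I \<Longrightarrow> e s = e0" unfolding constant_on_def by blast
  have const: "\<And>s. s \<in> I \<Longrightarrow> V 2 s \<bullet> d = e0 * c"
  proof -
    fix s assume s: "s \<in> I"
    have "V 2 s \<bullet> d = e s * (N (\<alpha> s) \<bullet> d)" using par[OF s]
      by (metis inner_scaleR_left)
    also have "\<dots> = e0 * c" using e0[OF s] c assms(5) s by (auto simp: inner_commute)
    finally show "V 2 s \<bullet> d = e0 * c" .
  qed
  show ?thesis
  proof
    fix s assume s: "s \<in> I"
    obtain D where D: "(V 2 has_vector_derivative D) (at s)" using dV2[OF s] by blast
    have "((\<lambda>t. V 2 t \<bullet> d) has_vector_derivative D \<bullet> d) (at s)"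
      using bounded_linear.has_vector_derivative[OF bounded_linear_inner_left D] .
    hence d1: "((\<lambda>t. V 2 t \<bullet> d) has_real_derivative D \<bullet> d) (at s)"
      by (simp add: has_real_derivative_iff_has_vector_derivative)
    have "((\<lambda>t. e0 * c) has_real_derivative 0) (at s)" by simp
    hence d2: "((\<lambda>t. V 2 t \<bullet> d) has_real_derivative 0) (at s)"
      by (rule has_field_derivative_transform_within_open[OF _ assms(3) s]) (simp add: const)
    have "D \<bullet> d = 0" using DERIV_unique[OF d1 d2] .
    thus "vector_derivative (V 2) (at s) \<bullet> d = 0" using vector_derivative_at[OF D] by simp
  qed
qed

end
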